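(* Let $\mathfrak{P}$ be a compactness-like topological property and $X$ a space. Then $\lambda_\mathfrak{P}X=\beta X$ if and only if $X$ has $\mathfrak{P}$.
   Context: All spaces are completely regular Hausdorff; $\beta X$ is the Stone–Čech compactification. $\mathrm{Coz}(X)$ is the set of cozero-sets of $X$. $\lambda_\mathfrak{P}X=\bigcup\{\mathrm{int}_{\beta X}\mathrm{cl}_{\beta X}C: C\in\mathrm{Coz}(X),\ \mathrm{cl}_XC\text{ has }\mathfrak{P}\}$. A topological property is compactness-like if it is hereditary to clopen subspaces, finitely additive (finite disjoint unions of closed subspaces with $\mathfrak{P}$ have $\mathfrak{P}$), invariant and inverse invariant under perfect surjections, and satisfies Mrówka's condition (W): if a space $Z$ has a point $p$ with an open base $\mathscr{B}$ at $p$ such that $Z\setminus B$ has $\mathfrak{P}$ for all $B\in\mathscr{B}$, then $Z$ has $\mathfrak{P}$. *)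

theory Defs
  imports "HOL-Analysis.Analysis"
begin

definition tychonoff :: "'a topology \<Rightarrow> bool" where
  "tychonoff X \<longleftrightarrow> completely_regular_space X \<and> Hausdorff_space X"

definition cozero_set :: "'a topology \<Rightarrow> 'a set \<Rightarrow> bool" where
  "cozero_set X C \<longleftrightarrow>
     (\<exists>f. continuous_map X euclideanreal f \<and> C = {x \<in> topspace X. f x \<noteq> 0})"

definition stone_cech :: "'a topology \<Rightarrow> 'b topology \<Rightarrow> ('a \<Rightarrow> 'b) \<Rightarrow> bool" where
  "stone_cech X K e \<longleftrightarrow>
     compact_space K \<and> Hausdorff_space K \<and> embedding_map X K e \<and>
     K closure_of (e ` topspace X) = topspace K \<and>
     (\<forall>f. continuous_map X euclideanreal f \<and> (\<exists>B. \<forall>x\<in>topspace X. \<bar>f x\<bar> \<le> B) \<longrightarrow>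
        (\<exists>g. continuous_map K euclideanreal g \<and> (\<forall>x\<in>topspace X. g (e x) = f x)))"

definition lambda_P :: "('a topology \<Rightarrow> bool) \<Rightarrow> 'a topology \<Rightarrow> 'b topology \<Rightarrow> ('a \<Rightarrow> 'b) \<Rightarrow> 'b set" where
  "lambda_P P X K e =
     \<Union>{K interior_of (K closure_of (e ` C)) | C.
          cozero_set X C \<and> P (subtopology X (X closure_of C))}"

definition open_base_at :: "'a topology \<Rightarrow> 'a \<Rightarrow> 'a set set \<Rightarrow> bool" where
  "open_base_at Z p \<B> \<longleftrightarrow>
     (\<forall>B\<in>\<B>. openin Z B \<and> p \<in> B) \<and>
     (\<forall>U. openin Z U \<and> p \<in> U \<longrightarrow> (\<exists>B\<in>\<B>. B \<subseteq> U))"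

text \<open>Compactness-like properties (of spaces whose points range over the type 'a).\<close>
definition compactness_like :: "('a topology \<Rightarrow> bool) \<Rightarrow> bool" where
  "compactness_like P \<longleftrightarrow>
     \<comment> \<open>hereditary to clopen subspaces\<close>
     (\<forall>Y A. tychonoff Y \<and> P Y \<and> closedin Y A \<and> openin Y A \<longrightarrow> P (subtopology Y A)) \<and>
     \<comment> \<open>finitely additive\<close>
     (\<forall>Y \<F>. tychonoff Y \<and> finite \<F> \<and> \<Union>\<F> = topspace Y \<and>
        (\<forall>F\<in>\<F>. closedin Y F \<and> P (subtopology Y F)) \<and>
        (\<forall>F\<in>\<F>. \<forall>G\<in>\<F>. F \<noteq> G \<longrightarrow> F \<inter> G = {}) \<longrightarrow> P Y) \<and>
     \<comment> \<open>invariant under perfect surjections\<close>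
     (\<forall>Y Z f. tychonoff Y \<and> tychonoff Z \<and> perfect_map Y Z f \<and> P Y \<longrightarrow> P Z) \<and>
     \<comment> \<open>inverse invariant under perfect surjections\<close>
     (\<forall>Y Z f. tychonoff Y \<and> tychonoff Z \<and> perfect_map Y Z f \<and> P Z \<longrightarrow> P Y) \<and>
     \<comment> \<open>Mrowka's condition (W)\<close>
     (\<forall>Z p \<B>. tychonoff Z \<and> p \<in> topspace Z \<and> open_base_at Z p \<B> \<and>
        (\<forall>B\<in>\<B>. P (subtopology Z (topspace Z - B))) \<longrightarrow> P Z)"

end

theory Submission
  imports Defs
begin

lemma inj_bool_prod: "infinite (UNIV::'a set) \<Longrightarrow> \<exists>j::bool\<times>'a \<Rightarrow> 'a. inj j"
proof -
  assume inf: "infinite (UNIV::'a set)"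
  obtain c :: "nat \<Rightarrow> 'a" where c: "inj c"
    using inf infinite_countable_subset by blast
  have "ordLeq3 (card_of (UNIV::bool set)) (card_of (UNIV::'a set))"
    unfolding card_of_ordLeq[symmetric]
    by (rule exI[of _ "\<lambda>b. c (if b then 1 else 0)"]) (auto simp: inj_on_def dest: injD[OF c])
  from this have "ordIso2 (card_of ((UNIV::'a set) \<times> (UNIV::bool set))) (card_of (UNIV::'a set))"
    by (intro card_of_Times_infinite_simps(1)[OF inf]) auto
  then obtain f where "bij_betw f ((UNIV::'a set) \<times> (UNIV::bool set)) (UNIV::'a set)"
    using card_of_ordIso by blast
  then have "inj (f \<circ> prod.swap)"
    by (simp add: bij_betw_def inj_on_def) 
  then show ?thesis by blast
qed

lemma cl_parts2:
  assumes "compactness_like P"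
  shows "\<forall>Y \<F>. tychonoff Y \<and> finite \<F> \<and> \<Union>\<F> = topspace Y \<and>
        (\<forall>F\<in>\<F>. closedin Y F \<and> P (subtopology Y F)) \<and>
        (\<forall>F\<in>\<F>. \<forall>G\<in>\<F>. F \<noteq> G \<longrightarrow> F \<inter> G = {}) \<longrightarrow> P Y"
  using assms unfolding compactness_like_def by (elim conjE) assumption

lemma cl_parts3:
  assumes "compactness_like P"
  shows "\<forall>Y Z f. tychonoff Y \<and> tychonoff Z \<and> perfect_map Y Z f \<and> P Y \<longrightarrow> P Z"
  using assms unfolding compactness_like_def by (elim conjE) assumption

lemma cl_parts4:
  assumes "compactness_like P"
  shows "\<forall>Z p \<B>. tychonoff Z \<and> p \<in> topspace Z \<and> open_base_at Z p \<B> \<and>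
        (\<forall>B\<in>\<B>. P (subtopology Z (topspace Z - B))) \<longrightarrow> P Z"
  using assms unfolding compactness_like_def by (elim conjE) assumption

lemma cl_add: "compactness_like P \<Longrightarrow> tychonoff Y \<Longrightarrow> finite \<F> \<Longrightarrow> \<Union>\<F> = topspace Y \<Longrightarrow>
   (\<And>F. F\<in>\<F> \<Longrightarrow> closedin Y F \<and> P (subtopology Y F)) \<Longrightarrow>
   (\<And>F G. F\<in>\<F> \<Longrightarrow> G\<in>\<F> \<Longrightarrow> F \<noteq> G \<Longrightarrow> F \<inter> G = {}) \<Longrightarrow> P Y"
  apply (rule cl_parts2[rule_format, of P Y \<F>], assumption)
  apply (intro conjI ballI impI)
  by auto

lemma cl_perf: "compactness_like P \<Longrightarrow> tychonoff Y \<Longrightarrow> tychonoff Z \<Longrightarrow> perfect_map Y Z f \<Longrightarrow> P Y \<Longrightarrow> P Z"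
  by (rule cl_parts3[rule_format, of P Y Z f]) auto

lemma cl_W: "compactness_like P \<Longrightarrow> tychonoff Z \<Longrightarrow> p \<in> topspace Z \<Longrightarrow> open_base_at Z p \<B> \<Longrightarrow>
   (\<And>B. B\<in>\<B> \<Longrightarrow> P (subtopology Z (topspace Z - B))) \<Longrightarrow> P Z"
  by (rule cl_parts4[rule_format, of P Z p \<B>]) auto

lemma tych_sub: "tychonoff X \<Longrightarrow> tychonoff (subtopology X S)"
  by (simp add: tychonoff_def completely_regular_space_subtopology Hausdorff_space_subtopology)

lemma tych_homeo: "tychonoff X \<Longrightarrow> X homeomorphic_space Y \<Longrightarrow> tychonoff Y"
  unfolding tychonoff_def
  using homeomorphic_completely_regular_space homeomorphic_Hausdorff_space by blast

lemma P_homeo: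
  assumes "compactness_like P" "tychonoff X" "P X" "X homeomorphic_space Y"
  shows "P Y"
proof -
  obtain f where "homeomorphic_map X Y f" using assms(4) homeomorphic_space by blast
  then have "perfect_map X Y f" by (rule homeomorphic_imp_perfect_map)
  moreover have "tychonoff Y" using assms tych_homeo by blast
  ultimately show ?thesis using assms(1-3) cl_perf by blast
qed

lemma P_empty:
  assumes "compactness_like P" "topspace Y = {}"
  shows "P Y"
proof -
  have "tychonoff Y" using assms(2)
    by (simp add: tychonoff_def completely_regular_space_def Hausdorff_space_def)
  then show ?thesis using assms(2) by (intro cl_add[OF assms(1), of Y "{}"]) auto
qed

lemma P_point:
  assumes cl: "compactness_like P" and ty: "tychonoff X" and a: "a \<in> topspace X"
  shows "P (subtopology X {a})"
proof -
  let ?Z = "subtopology X {a}"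
  have ts: "topspace ?Z = {a}" using a by auto
  have tyZ: "tychonoff ?Z" using ty tych_sub by blast
  have ob: "open_base_at ?Z a {{a}}"
    unfolding open_base_at_def using ts openin_topspace[of ?Z] by auto
  have e: "P (subtopology ?Z (topspace ?Z - {a}))"
    by (rule P_empty[OF cl]) (use a in auto)
  have az: "a \<in> topspace ?Z" using ts by blast
  show ?thesis
  proof (rule cl_W[OF cl tyZ az ob])
    fix B assume "B \<in> {{a}}"
    then have "B = {a}" by blast
    then show "P (subtopology ?Z (topspace ?Z - B))" using e by simp
  qed
qed

lemma P_finite:
  assumes cl: "compactness_like P" and ty: "tychonoff X" and fin: "finite (topspace X)"
  shows "P X"
proof -
  let ?F = "(\<lambda>a. {a}) ` topspace X"
  have t1: "t1_space X" using ty by (simp add: tychonoff_def Hausdorff_imp_t1_space)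
  have c: "closedin X F \<and> P (subtopology X F)" if F: "F\<in>?F" for F
  proof -
    obtain a where a: "a \<in> topspace X" "F = {a}" using F by blast
    have "closedin X {a}" using t1 a(1) by (simp add: t1_space_closedin_singleton)
    then show ?thesis using P_point[OF cl ty a(1)] unfolding a(2) by (rule conjI)
  qed
  have u: "\<Union>?F = topspace X" by auto
  have f: "finite ?F" using fin by simp
  have d: "F \<inter> G = {}" if "F\<in>?F" "G\<in>?F" "F \<noteq> G" for F G using that by blast
  show ?thesis by (rule cl_add[OF cl ty f u c d])
qed

lemma slice_homeo:
  assumes "A \<subseteq> topspace X"
  shows "homeomorphic_map (subtopology X A)
           (subtopology (prod_topology (discrete_topology (UNIV::bool set)) X) ({b} \<times> A)) (\<lambda>x. (b,x))"
proof -
  let ?D = "discrete_topology (UNIV::bool set)"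
  have c0: "continuous_map (subtopology X A) X (\<lambda>x. x)"
    by (rule continuous_map_from_subtopology[OF continuous_map_id[unfolded id_def]])
  have c1: "continuous_map (subtopology X A) (prod_topology ?D X) (\<lambda>x. (b,x))"
    by (rule continuous_map_pairedI[OF continuous_map_const[THEN iffD2, OF disjI2] c0]) simp
  have c2: "continuous_map (subtopology X A) (subtopology (prod_topology ?D X) ({b} \<times> A)) (\<lambda>x. (b,x))"
    using c1 by (simp add: continuous_map_in_subtopology image_subset_iff)
  have c3: "continuous_map (subtopology (prod_topology ?D X) ({b} \<times> A)) X snd"
    by (rule continuous_map_from_subtopology[OF continuous_map_snd])
  have c4: "continuous_map (subtopology (prod_topology ?D X) ({b} \<times> A)) (subtopology X A) snd"
    using c3 by (auto simp: continuous_map_in_subtopology)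
  have "homeomorphic_maps (subtopology X A)
           (subtopology (prod_topology ?D X) ({b} \<times> A)) (\<lambda>x. (b,x)) snd"
    unfolding homeomorphic_maps_def
    by (intro conjI c2 c4 ballI) (auto simp: topspace_subtopology)
  then show ?thesis by (rule homeomorphic_maps_imp_map)
qed

lemma union2:
  fixes P :: "'a topology \<Rightarrow> bool"
  assumes cl: "compactness_like P" and ty: "tychonoff X" and inf: "infinite (UNIV::'a set)"
    and A: "closedin X A" and B: "closedin X B" and AB: "A \<union> B = topspace X"
    and PA: "P (subtopology X A)" and PB: "P (subtopology X B)"
  shows "P X"
proof -
  obtain j :: "bool \<times> 'a \<Rightarrow> 'a" where j: "inj j" using inj_bool_prod[OF inf] by blast
  let ?D = "discrete_topology (UNIV::bool set)"
  define Z0 where "Z0 = prod_topology ?D X"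
  define S where "S = {True}\<times>A \<union> {False}\<times>B"
  define Y0 where "Y0 = subtopology Z0 S"
  have As: "A \<subseteq> topspace X" using A closedin_subset by blast
  have Bs: "B \<subseteq> topspace X" using B closedin_subset by blast
  have tsZ0: "topspace Z0 = UNIV \<times> topspace X" by (simp add: Z0_def)
  have SZ: "S \<subseteq> topspace Z0" using As Bs by (auto simp: S_def tsZ0)
  have tsY0: "topspace Y0 = S" using SZ by (auto simp: Y0_def)
  have cTA: "closedin Z0 ({True}\<times>A)" unfolding Z0_def using A by (simp add: closedin_prod_Times_iff)
  have cFB: "closedin Z0 ({False}\<times>B)" unfolding Z0_def using B by (simp add: closedin_prod_Times_iff)
  have cS: "closedin Z0 S" unfolding S_def using cTA cFB by (rule closedin_Un)
  have tyZ0: "tychonoff Z0" using ty unfolding Z0_def tychonoff_def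
    by (simp add: completely_regular_space_prod_topology Hausdorff_space_prod_topology
        completely_regular_space_discrete_topology)
  have tyY0: "tychonoff Y0" unfolding Y0_def by (rule tych_sub[OF tyZ0])
  define g where "g = inv j"
  have gj: "\<And>z. g (j z) = z" using j by (simp add: g_def)
  have gjid: "g \<circ> j = id" by (auto simp: gj fun_eq_iff)
  define Y' where "Y' = pullback_topology (j ` S) g Y0"
  have tsY': "topspace Y' = j ` S"
    unfolding Y'_def topspace_pullback_topology tsY0 using gj by auto
  have hm: "homeomorphic_maps Y0 Y' j g"
    unfolding homeomorphic_maps_def
  proof (intro conjI ballI)
    show "continuous_map Y0 Y' j" unfolding Y'_def
    proof (rule continuous_map_pullback')
      show "continuous_map Y0 Y0 (g \<circ> j)" by (simp add: gjid)
      show "topspace Y0 \<subseteq> j -` (j ` S)" by (auto simp: tsY0)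
    qed
    have "continuous_map Y' Y0 (id \<circ> g)" unfolding Y'_def
      by (rule continuous_map_pullback) simp
    then show "continuous_map Y' Y0 g" by simp
    show "g (j x) = x" for x by (simp add: gj)
    fix y assume "y \<in> topspace Y'"
    then show "j (g y) = y" by (auto simp: tsY' gj)
  qed
  have hmap: "homeomorphic_map Y0 Y' j" using hm homeomorphic_maps_imp_map by blast
  have hY: "Y0 homeomorphic_space Y'" using hmap homeomorphic_space by blast
  have tyY': "tychonoff Y'" using tych_homeo tyY0 hY by blast
  have cl_slice: "closedin Y' (j ` ({b}\<times>C))" if c: "closedin Z0 ({b}\<times>C)" and sub: "{b}\<times>C \<subseteq> S" for b C
  proof -
    have "closedin Y0 ({b}\<times>C)" unfolding Y0_def by (rule closedin_subset_topspace[OF c sub])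
    then show ?thesis using homeomorphic_map_closedness_eq[OF hmap] by blast
  qed
  have P_slice: "P (subtopology Y' (j ` ({b}\<times>C)))"
    if Cs: "C \<subseteq> topspace X" and PC: "P (subtopology X C)" and sub: "{b}\<times>C \<subseteq> S" for b C
  proof -
    have h1: "homeomorphic_map (subtopology X C) (subtopology Z0 ({b}\<times>C)) (Pair b)"
      unfolding Z0_def using slice_homeo[OF Cs] by simp
    have e: "subtopology Y0 ({b}\<times>C) = subtopology Z0 ({b}\<times>C)"
      by (simp add: Y0_def subtopology_subtopology inf.absorb2[OF sub])
    have h2: "homeomorphic_map (subtopology Y0 ({b}\<times>C)) (subtopology Y' (j ` ({b}\<times>C))) j"
      by (rule homeomorphic_map_subtopologies[OF hmap]) (use sub in \<open>auto simp: tsY0 tsY'\<close>)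
    have "homeomorphic_map (subtopology X C) (subtopology Y' (j ` ({b}\<times>C))) (j \<circ> Pair b)"
      using homeomorphic_map_compose[OF h1 h2[unfolded e]] .
    then have "subtopology X C homeomorphic_space subtopology Y' (j ` ({b}\<times>C))"
      using homeomorphic_space by blast
    then show ?thesis using P_homeo[OF cl tych_sub[OF ty] PC] by blast
  qed
  define FT where "FT = j ` ({True}\<times>A)"
  define FF where "FF = j ` ({False}\<times>B)"
  have subT: "{True}\<times>A \<subseteq> S" and subF: "{False}\<times>B \<subseteq> S" by (auto simp: S_def)
  have FTp: "closedin Y' FT \<and> P (subtopology Y' FT)"
    unfolding FT_def using cl_slice[OF cTA subT] P_slice[OF As PA subT] by blast
  have FFp: "closedin Y' FF \<and> P (subtopology Y' FF)"
    unfolding FF_def using cl_slice[OF cFB subF] P_slice[OF Bs PB subF] by blast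
  have disj: "FT \<inter> FF = {}" using j by (auto simp: FT_def FF_def inj_eq)
  have PY': "P Y'"
  proof (rule cl_add[OF cl tyY', of "{FT, FF}"])
    show "finite {FT,FF}" by simp
    show "\<Union>{FT,FF} = topspace Y'" by (auto simp: tsY' FT_def FF_def S_def)
    fix F assume "F \<in> {FT,FF}"
    then show "closedin Y' F \<and> P (subtopology Y' F)" using FTp FFp by blast
  next
    fix F G assume "F \<in> {FT,FF}" "G \<in> {FT,FF}" "F \<noteq> G"
    then show "F \<inter> G = {}" using disj by blast
  qed
  have cD: "compact_space ?D" unfolding compact_space_def by (rule finite_imp_compactin) auto
  have pf: "perfect_map Y0 X snd"
    unfolding perfect_map_def proper_map_def
  proof (intro conjI ballI)
    show "continuous_map Y0 X snd" unfolding Y0_def Z0_def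
      by (rule continuous_map_from_subtopology[OF continuous_map_snd])
    show "closed_map Y0 X snd" unfolding closed_map_def
    proof (intro allI impI)
      fix U assume "closedin Y0 U"
      then have "closedin Z0 U" unfolding Y0_def by (rule closedin_trans_full[OF _ cS])
      moreover have "closed_map Z0 X snd" unfolding Z0_def by (rule closed_map_snd[OF cD])
      ultimately show "closedin X (snd ` U)" unfolding closed_map_def by blast
    qed
    fix y assume "y \<in> topspace X"
    have "{x \<in> topspace Y0. snd x = y} \<subseteq> {(True,y),(False,y)}"
    proof
      fix x assume "x \<in> {x \<in> topspace Y0. snd x = y}"
      then have "snd x = y" by simp
      then show "x \<in> {(True,y),(False,y)}" by (cases x; cases "fst x") auto
    qed
    then have "finite {x \<in> topspace Y0. snd x = y}" by (rule finite_subset) simp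
    then show "compactin Y0 {x \<in> topspace Y0. snd x = y}" by (intro finite_imp_compactin) auto
  next
    show "snd ` topspace Y0 = topspace X" unfolding tsY0 AB[symmetric] S_def by (simp add: image_Un)
  qed
  have hm': "homeomorphic_maps Y' Y0 g j" using hm homeomorphic_maps_sym by blast
  have pf2: "perfect_map Y' X (snd \<circ> g)"
    by (rule perfect_map_compose[OF homeomorphic_imp_perfect_map[OF homeomorphic_maps_imp_map[OF hm']] pf])
  show "P X" by (rule cl_perf[OF cl tyY' ty pf2 PY'])
qed

lemma union_fin:
  fixes P :: "'a topology \<Rightarrow> bool"
  assumes cl: "compactness_like P" and ty: "tychonoff X" and inf: "infinite (UNIV::'a set)"
    and fin: "finite \<F>"
  shows "(\<forall>F\<in>\<F>. closedin X F \<and> P (subtopology X F)) \<Longrightarrow> P (subtopology X (\<Union>\<F>))"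
  using fin
proof (induction \<F> rule: finite_induct)
  case empty
  then show ?case by (intro P_empty[OF cl]) simp
next
  case (insert F \<F>)
  let ?Y = "subtopology X (F \<union> \<Union>\<F>)"
  have cF: "closedin X F" and PF: "P (subtopology X F)" using insert.prems by auto
  have cU: "closedin X (\<Union>\<F>)" using insert.prems insert.hyps(1) by (auto intro: closedin_Union)
  have PU: "P (subtopology X (\<Union>\<F>))" using insert by auto
  have "P ?Y"
  proof (rule union2[OF cl tych_sub[OF ty] inf])
    show "closedin ?Y F" using cF by (simp add: closedin_subset_topspace)
    show "closedin ?Y (\<Union>\<F>)" using cU by (simp add: closedin_subset_topspace)
    show "F \<union> \<Union>\<F> = topspace ?Y" using cF cU closedin_subset by auto
    show "P (subtopology ?Y F)" using PF by (simp add: subtopology_subtopology Int_absorb1)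
    show "P (subtopology ?Y (\<Union>\<F>))" using PU by (simp add: subtopology_subtopology Int_absorb1)
  qed
  then show ?case by simp
qed

theorem lemma4p21:
  fixes P :: "'a topology \<Rightarrow> bool" and X :: "'a topology"
    and K :: "'b topology" and e :: "'a \<Rightarrow> 'b"
  assumes "compactness_like P"
    and "tychonoff X"
    and "stone_cech X K e"
  shows "lambda_P P X K e = topspace K \<longleftrightarrow> P X"
proof -
  note cl = assms(1) and ty = assms(2)
  have cK: "compact_space K" and emb: "embedding_map X K e"
    and dense: "K closure_of (e ` topspace X) = topspace K"
    using assms(3) unfolding stone_cech_def by blast+
  have hom: "homeomorphic_map X (subtopology K (e ` topspace X)) e"
    using emb unfolding embedding_map_def .
  have injE: "inj_on e (topspace X)" using hom homeomorphic_imp_injective_map by blast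
  have eK: "e x \<in> topspace K" if "x \<in> topspace X" for x
  proof -
    have "e ` topspace X = topspace (subtopology K (e ` topspace X))"
      using hom by (rule homeomorphic_imp_surjective_map)
    then show ?thesis using that by auto
  qed
  define \<U> where "\<U> = {K interior_of (K closure_of (e ` C)) | C.
          cozero_set X C \<and> P (subtopology X (X closure_of C))}"
  have lam: "lambda_P P X K e = \<Union>\<U>" unfolding lambda_P_def \<U>_def by (rule refl)
  show ?thesis
  proof
    assume L: "lambda_P P X K e = topspace K"
    show "P X"
    proof (cases "finite (UNIV::'a set)")
      case True
      have "finite (topspace X)" by (rule finite_subset[OF subset_UNIV True])
      then show ?thesis by (rule P_finite[OF cl ty])
    next
      case False
      have op: "\<forall>U\<in>\<U>. openin K U"
      proof
        fix U assume "U \<in> \<U>"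
        then obtain C where "U = K interior_of (K closure_of (e ` C))" unfolding \<U>_def by blast
        then show "openin K U" by simp
      qed
      have cov: "\<Union>\<U> = topspace K" using L unfolding lam .
      have "\<exists>\<F>. finite \<F> \<and> \<F> \<subseteq> \<U> \<and> \<Union>\<F> = topspace K"
        by (rule cK[unfolded compact_space, THEN spec, THEN mp, OF conjI[OF op cov]])
      then obtain \<F> where F: "finite \<F>" "\<F> \<subseteq> \<U>" "\<Union>\<F> = topspace K"
        by (elim exE conjE) (rule that)
      have ex: "\<forall>V\<in>\<F>. \<exists>C. V = K interior_of (K closure_of (e ` C)) \<and>
          cozero_set X C \<and> P (subtopology X (X closure_of C))"
      proof
        fix V assume "V \<in> \<F>"
        then have "V \<in> \<U>" by (rule subsetD[OF F(2)])
        then show "\<exists>C. V = K interior_of (K closure_of (e ` C)) \<and>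
          cozero_set X C \<and> P (subtopology X (X closure_of C))" unfolding \<U>_def by (rule CollectD)
      qed
      obtain c where c0: "\<forall>V\<in>\<F>. V = K interior_of (K closure_of (e ` c V)) \<and>
          cozero_set X (c V) \<and> P (subtopology X (X closure_of c V))"
        using bchoice[OF ex] by blast
      have c: "V = K interior_of (K closure_of (e ` c V)) \<and>
          cozero_set X (c V) \<and> P (subtopology X (X closure_of c V))" if "V\<in>\<F>" for V
        using c0 that by blast
      have cs: "c V \<subseteq> topspace X" if "V \<in> \<F>" for V
        using c[OF that] unfolding cozero_set_def by blast
      define \<G> where "\<G> = (\<lambda>V. X closure_of c V) ` \<F>"
      have Gfin: "finite \<G>" using F(1) by (simp add: \<G>_def)
      have Gp: "\<forall>G\<in>\<G>. closedin X G \<and> P (subtopology X G)"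
      proof
        fix G assume "G \<in> \<G>"
        then obtain V where V: "V \<in> \<F>" "G = X closure_of c V" unfolding \<G>_def by blast
        show "closedin X G \<and> P (subtopology X G)" using c[OF V(1)] V(2) closedin_closure_of by blast
      qed
      have Gcov: "\<Union>\<G> = topspace X"
      proof
        show "\<Union>\<G> \<subseteq> topspace X" unfolding \<G>_def by (rule UN_least) (rule closure_of_subset_topspace)
        show "topspace X \<subseteq> \<Union>\<G>"
        proof
          fix x assume x: "x \<in> topspace X"
          have "e x \<in> topspace K" by (rule eK[OF x])
          then have "e x \<in> \<Union>\<F>" unfolding F(3) .
          then obtain V where V: "V \<in> \<F>" "e x \<in> V" by (rule UnionE)
          have "V \<subseteq> K closure_of (e ` c V)"
            using c[OF V(1)] interior_of_subset by metis
          then have ecl: "e x \<in> K closure_of (e ` c V)" using V(2) by (rule subsetD)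
          have ex: "e x \<in> e ` topspace X" using x by (rule imageI)
          have sub: "e ` c V \<subseteq> e ` topspace X" by (rule image_mono[OF cs[OF V(1)]])
          have "subtopology K (e ` topspace X) closure_of (e ` c V)
                = e ` topspace X \<inter> K closure_of (e ` c V)"
            by (simp only: closure_of_subtopology Int_absorb1[OF sub])
          then have "e x \<in> subtopology K (e ` topspace X) closure_of (e ` c V)"
            using ex ecl by (simp only: IntI)
          then have "e x \<in> e ` (X closure_of c V)"
            unfolding homeomorphic_map_closure_of[OF hom cs[OF V(1)]] .
          then obtain z where z: "z \<in> X closure_of c V" "e x = e z" by (rule imageE) (rule that)
          have "z \<in> topspace X" using closure_of_subset_topspace z(1) by (rule subsetD)
          then have "x = z" using inj_onD[OF injE z(2) x] by simp
          then have "x \<in> X closure_of c V" using z(1) by simp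
          moreover have "X closure_of c V \<in> \<G>" unfolding \<G>_def using V(1) by (rule imageI)
          ultimately show "x \<in> \<Union>\<G>" by (rule UnionI[rotated])
        qed
      qed
      have "P (subtopology X (\<Union>\<G>))" using Gp by (rule union_fin[OF cl ty False Gfin])
      then show ?thesis using Gcov by simp
    qed
  next
    assume PX: "P X"
    show "lambda_P P X K e = topspace K"
    proof
      show "lambda_P P X K e \<subseteq> topspace K" unfolding lam
      proof (rule Union_least)
        fix U assume "U \<in> \<U>"
        then obtain C where "U = K interior_of (K closure_of (e ` C))" unfolding \<U>_def by blast
        then show "U \<subseteq> topspace K" using interior_of_subset_topspace by simp
      qed
      have cz: "cozero_set X (topspace X)" unfolding cozero_set_def
        by (rule exI[of _ "\<lambda>x. 1"]) auto
      have "P (subtopology X (X closure_of topspace X))" using PX by simp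
      then have "K interior_of (K closure_of (e ` topspace X)) \<in> \<U>"
        unfolding \<U>_def using cz by blast
      then have "topspace K \<in> \<U>" using dense by simp
      then show "topspace K \<subseteq> lambda_P P X K e" unfolding lam by blast
    qed
  qed
qed

end
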